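(* Let $(\mathbf q^\theta)_{\theta>0}$ be a family of information structures and $V^+=\limsup_{\theta\to0}\frac1\theta\mathrm{VoI}_A(\mathbf q^\theta)$. Assume that either (a) $\mathbb E\big[d(\mathbf q^\theta,\Delta^c_A(p_0))\big]=o(\theta)$ as $\theta\to0$, or (b) $\partial A$ is a $C^2$ submanifold of dimension $|K|-1$, the agent is flexible at $p_0$ (e.g. $v_A$ is twice differentiable at $p_0$ with positive definite Hessian), and $\mathbb E\|\mathbf q^\theta-p_0\|^2=o(\theta)$. Then $V^+=0$.
   Context: Let $K$ be finite, signed measures identified with $\mathbb R^K$, $\langle s,v\rangle=\sum_k s_kv_k$, Euclidean norm. $\Delta$ is the simplex of probabilities on $K$; $p_0\in\Delta$ has full support. $A\subset\mathbb R^K$ is a nonempty compact convex action set, $v_A(p)=\max_{a\in A}\langle p,a\rangle$, $A^\star(p)=\arg\max_{a\in A}\langle p,a\rangle$. For $a\in A$, $\Delta^\star_A(a)=\{p\in\Delta:\langle p,a'\rangle\le\langle p,a\rangle\ \forall a'\in A\}$; the confidence set is $\Delta^c_A(p_0)=\bigcap_{a\in A^\star(p_0)}\Delta^\star_A(a)$ and $d(q,\Delta^c_A(p_0))=\inf_{p\in\Delta^c_A(p_0)}\|p-q\|$. The agent is flexible at $p_0$ if (equivalently under the $C^2$ assumption) $A^\star(p_0)=\{a^\sharp\}$ with all principal curvatures of $\partial A$ at $a^\sharp$ positive, or $v_A$ is twice differentiable at $p_0$ (along $\Delta$) with positive definite Hessian. An information structure is a $\Delta$-valued random variable $\mathbf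 q$ with $\mathbb E[\mathbf q]=p_0$, and $\mathrm{VoI}_A(\mathbf q)=\mathbb E[v_A(\mathbf q)]-v_A(p_0)$. *)

theory Defs
  imports "HOL-Probability.Probability" "HOL-Library.Landau_Symbols"
begin

definition prob_simplex :: "(real^'k::finite) set" where
  "prob_simplex = {p. (\<forall>k. 0 \<le> p $ k) \<and> sum (\<lambda>k. p $ k) UNIV = 1}"

definition valfun :: "(real^'k::finite) set \<Rightarrow> real^'k \<Rightarrow> real" where
  "valfun A p = (SUP a\<in>A. p \<bullet> a)"

definition optact :: "(real^'k::finite) set \<Rightarrow> real^'k \<Rightarrow> (real^'k) set" where
  "optact A p = {a \<in> A. \<forall>a'\<in>A. p \<bullet> a' \<le> p \<bullet> a}"

definition optbeliefs :: "(real^'k::finite) set \<Rightarrow> real^'k \<Rightarrow> (real^'k) set" where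
  "optbeliefs A a = {p \<in> prob_simplex. \<forall>a'\<in>A. p \<bullet> a' \<le> p \<bullet> a}"

definition confset :: "(real^'k::finite) set \<Rightarrow> real^'k \<Rightarrow> (real^'k) set" where
  "confset A p0 = (\<Inter>a\<in>optact A p0. optbeliefs A a)"

text \<open>The boundary of A is a C^2 embedded submanifold of dimension |K|-1
  (a C^2 hypersurface): locally the regular zero set of a C^2 function.\<close>
definition C2_hypersurface :: "(real^'k::finite) set \<Rightarrow> bool" where
  "C2_hypersurface S \<longleftrightarrow>
     (\<forall>x\<in>S. \<exists>U g grad Hess. open U \<and> x \<in> U \<and>
        (\<forall>y\<in>U. (g has_derivative (\<lambda>h. grad y \<bullet> h)) (at y)) \<and>
        (\<forall>y\<in>U. (grad has_derivative (\<lambda>h. Hess y *v h)) (at y)) \<and>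
        continuous_on U (Hess :: real^'k \<Rightarrow> real^'k^'k) \<and>
        grad x \<noteq> 0 \<and>
        S \<inter> U = {y\<in>U. (g :: real^'k \<Rightarrow> real) y = 0})"

definition flexible :: "(real^'k::finite) set \<Rightarrow> real^'k \<Rightarrow> bool" where
  "flexible A p0 \<longleftrightarrow>
     (\<exists>G (H :: real^'k^'k).
        (\<forall>\<^sub>F p in at p0 within prob_simplex.
            (valfun A has_derivative (\<lambda>h. G p \<bullet> h)) (at p within prob_simplex)) \<and>
        (valfun A has_derivative (\<lambda>h. G p0 \<bullet> h)) (at p0 within prob_simplex) \<and>
        (G has_derivative (\<lambda>h. H *v h)) (at p0 within prob_simplex) \<and>
        (\<forall>h. sum (\<lambda>k. h $ k) UNIV = 0 \<and> h \<noteq> 0 \<longrightarrow> 0 < h \<bullet> (H *v h)))"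

end

theory Submission
  imports Defs
begin

lemma simplex_norm_le:
  assumes "p \<in> prob_simplex" shows "norm (p::real^'k::finite) \<le> 1"
proof -
  have "norm p \<le> sum (\<lambda>i. \<bar>p$i\<bar>) UNIV" by (rule norm_le_l1_cart)
  also have "\<dots> = sum (\<lambda>i. p$i) UNIV" using assms by (simp add: prob_simplex_def)
  also have "\<dots> = 1" using assms by (simp add: prob_simplex_def)
  finally show ?thesis .
qed

lemma convex_simplex: "convex (prob_simplex :: (real^'k::finite) set)"
  unfolding convex_def prob_simplex_def
  by (auto simp: sum.distrib sum_distrib_left[symmetric])

lemma bound_A:
  assumes "compact (A::(real^'k::finite) set)"
  obtains R where "R > 0" "\<forall>a\<in>A. norm a \<le> R"
proof -
  obtain R where "\<forall>a\<in>A. norm a \<le> R" using compact_imp_bounded[OF assms] bounded_iff by blast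
  then show ?thesis using that[of "max R 1"] by force
qed

lemma bdd_inner:
  assumes "\<forall>a\<in>A. norm a \<le> R"
  shows "bdd_above ((\<lambda>a. p \<bullet> a) ` A)"
proof (rule bdd_aboveI2)
  fix a assume "a \<in> A"
  have "p \<bullet> a \<le> norm p * norm a" by (rule norm_cauchy_schwarz)
  also have "\<dots> \<le> norm p * R" using assms \<open>a\<in>A\<close> by (simp add: mult_left_mono)
  finally show "p \<bullet> a \<le> norm p * R" .
qed

lemma valfun_ge:
  assumes "\<forall>a\<in>A. norm a \<le> R" "a \<in> A"
  shows "p \<bullet> a \<le> valfun A p"
  unfolding valfun_def using assms by (intro cSUP_upper bdd_inner) auto

lemma valfun_lip:
  assumes "\<forall>a\<in>A. norm a \<le> R" "A \<noteq> {}"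
  shows "valfun A p \<le> valfun A p' + R * norm (p - p')"
  unfolding valfun_def
proof (rule cSUP_least)
  show "A \<noteq> {}" by fact
  fix a assume a: "a \<in> A"
  have "p \<bullet> a = p' \<bullet> a + (p - p') \<bullet> a" by (simp add: inner_diff_left)
  also have "(p - p') \<bullet> a \<le> norm (p - p') * norm a" by (rule norm_cauchy_schwarz)
  also have "\<dots> \<le> norm (p - p') * R" using assms a by (simp add: mult_left_mono)
  finally have "p \<bullet> a \<le> p' \<bullet> a + R * norm (p - p')" by (simp add: mult.commute)
  also have "p' \<bullet> a \<le> (SUP a\<in>A. p' \<bullet> a)" using valfun_ge[OF assms(1) a] by (simp add: valfun_def)
  finally show "p \<bullet> a \<le> (SUP a\<in>A. p' \<bullet> a) + R * norm (p - p')" by simp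
qed

lemma valfun_lip_abs:
  assumes "\<forall>a\<in>A. norm a \<le> R" "A \<noteq> {}"
  shows "\<bar>valfun A p - valfun A p'\<bar> \<le> R * norm (p - p')"
  using valfun_lip[OF assms, of p p'] valfun_lip[OF assms, of p' p] by (simp add: norm_minus_commute)

lemma valfun_cont:
  assumes "\<forall>a\<in>A. norm a \<le> R" "A \<noteq> {}" "R \<ge> 0"
  shows "continuous_on UNIV (valfun A)"
proof (rule lipschitz_on_continuous_on)
  show "R-lipschitz_on UNIV (valfun A)"
    by (rule lipschitz_onI) (use valfun_lip_abs[OF assms(1,2)] assms(3) in \<open>auto simp: dist_norm dist_real_def\<close>)
qed


lemma final_limsup:
  fixes V g :: "real \<Rightarrow> real"
  assumes b: "\<And>\<theta>. \<theta> > 0 \<Longrightarrow> 0 \<le> V \<theta> \<and> V \<theta> \<le> C * g \<theta>"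
    and o: "g \<in> o[at_right 0](\<lambda>\<theta>. \<theta>)"
  shows "Limsup (at_right 0) (\<lambda>\<theta>. ereal (V \<theta> / \<theta>)) = 0"
proof -
  have ev: "eventually (\<lambda>\<theta>. \<theta> > 0) (at_right (0::real))"
    by (simp add: eventually_at_right_less)
  have t1: "((\<lambda>\<theta>. g \<theta> / \<theta>) \<longlongrightarrow> 0) (at_right 0)" using smalloD_tendsto[OF o] .
  have t2: "((\<lambda>\<theta>. C * (g \<theta> / \<theta>)) \<longlongrightarrow> 0) (at_right 0)"
    using tendsto_mult_right_zero[OF t1] by simp
  have "((\<lambda>\<theta>. V \<theta> / \<theta>) \<longlongrightarrow> 0) (at_right 0)"
  proof (rule tendsto_sandwich[OF _ _ tendsto_const t2])
    show "eventually (\<lambda>\<theta>. 0 \<le> V \<theta> / \<theta>) (at_right 0)"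
      using ev by eventually_elim (use b in \<open>simp add: divide_nonneg_pos\<close>)
    show "eventually (\<lambda>\<theta>. V \<theta> / \<theta> \<le> C * (g \<theta> / \<theta>)) (at_right 0)"
    proof (rule eventually_mono[OF ev])
      fix \<theta> :: real assume "\<theta> > 0"
      then have "V \<theta> / \<theta> \<le> (C * g \<theta>) / \<theta>" using b by (intro divide_right_mono) auto
      then show "V \<theta> / \<theta> \<le> C * (g \<theta> / \<theta>)" by simp
    qed
  qed
  then have "((\<lambda>\<theta>. ereal (V \<theta> / \<theta>)) \<longlongrightarrow> ereal 0) (at_right 0)"
    by (rule tendsto_ereal)
  then show ?thesis
    by (intro lim_imp_Limsup) (auto simp: zero_ereal_def)
qed


lemma taylor_bound:
  fixes A :: "(real^'k::finite) set"
  assumes flex: "flexible A p0" and R: "\<forall>a\<in>A. norm a \<le> R" "R > 0" "A \<noteq> {}"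
    and p0: "p0 \<in> prob_simplex"
  obtains G0 C where "\<forall>p\<in>prob_simplex. valfun A p - valfun A p0 - G0 \<bullet> (p - p0) \<le> C * (norm (p - p0))\<^sup>2"
proof -
  obtain G H where ev: "\<forall>\<^sub>F p in at p0 within prob_simplex.
            (valfun A has_derivative (\<lambda>h. G p \<bullet> h)) (at p within prob_simplex)"
    and dG: "(G has_derivative (\<lambda>h. H *v h)) (at p0 within prob_simplex)"
    using flex unfolding flexible_def by blast
  from ev obtain d1 where d1: "d1 > 0" "\<forall>p\<in>prob_simplex. p \<noteq> p0 \<and> dist p p0 < d1 \<longrightarrow>
      (valfun A has_derivative (\<lambda>h. G p \<bullet> h)) (at p within prob_simplex)"
    unfolding eventually_at by blast
  have "\<forall>e>0. \<exists>d>0. \<forall>y\<in>prob_simplex. norm (y - p0) < d \<longrightarrow>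
      norm (G y - G p0 - H *v (y - p0)) \<le> e * norm (y - p0)"
    using dG unfolding has_derivative_within_alt by blast
  then obtain d2 where d2: "d2 > 0" "\<forall>y\<in>prob_simplex. norm (y - p0) < d2 \<longrightarrow>
      norm (G y - G p0 - H *v (y - p0)) \<le> 1 * norm (y - p0)"
    using zero_less_one by blast
  obtain K where K: "K > 0" "\<And>x. norm (H *v x) \<le> norm x * K"
    using bounded_linear.pos_bounded[OF has_derivative_bounded_linear[OF dG]] by blast
  define \<delta> where "\<delta> = min d1 d2"
  have \<delta>: "\<delta> > 0" using d1 d2 by (simp add: \<delta>_def)
  have Gb: "norm (G y - G p0) \<le> (1 + K) * norm (y - p0)" if "y \<in> prob_simplex" "norm (y - p0) < \<delta>" for y
  proof -
    have "norm (G y - G p0) \<le> norm (G y - G p0 - H *v (y - p0)) + norm (H *v (y - p0))"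
      using norm_triangle_ineq[of "G y - G p0 - H *v (y - p0)" "H *v (y - p0)"] by simp
    also have "\<dots> \<le> 1 * norm (y - p0) + norm (y - p0) * K"
      using d2 that K(2)[of "y - p0"] by (intro add_mono) (auto simp: \<delta>_def)
    finally show ?thesis by (simp add: algebra_simps)
  qed
  have vc: "continuous_on UNIV (valfun A)" using valfun_cont[OF R(1) R(3)] R(2) by simp
  define G0 where "G0 = G p0"
  define C where "C = max (1 + K) ((R + norm G0) / \<delta>)"
  show thesis
  proof (rule that[of G0 C], intro ballI)
    fix p :: "real^'k" assume p: "p \<in> prob_simplex"
    define n where "n = norm (p - p0)"
    show "valfun A p - valfun A p0 - G0 \<bullet> (p - p0) \<le> C * (norm (p - p0))\<^sup>2"
    proof (cases "n < \<delta>")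
      case True
      show ?thesis
      proof (cases "p = p0")
        case True then show ?thesis by simp
      next
        case False
        then have npos: "n > 0" by (simp add: n_def)
        define \<gamma> where "\<gamma> = (\<lambda>t::real. p0 + t *\<^sub>R (p - p0))"
        define \<psi> where "\<psi> = (\<lambda>t. valfun A (\<gamma> t) - t * (G0 \<bullet> (p - p0)))"
        have \<gamma>S: "\<gamma> t \<in> prob_simplex" if "t \<in> {0..1}" for t
        proof -
          have "(1 - t) *\<^sub>R p0 + t *\<^sub>R p \<in> prob_simplex"
            using that by (intro convexD[OF convex_simplex p0 p]) auto
          then show ?thesis by (simp add: \<gamma>_def algebra_simps)
        qed
        have \<gamma>d: "norm (\<gamma> t - p0) = t * n" if "t \<ge> 0" for t
          using that by (simp add: \<gamma>_def n_def)
        have cont: "continuous_on {0..1} \<psi>"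
        proof -
          have "continuous_on {0..1} (\<lambda>t. valfun A (\<gamma> t))"
            by (rule continuous_on_compose2[OF vc]) (auto simp: \<gamma>_def intro!: continuous_intros)
          then show ?thesis unfolding \<psi>_def by (intro continuous_intros)
        qed
        have der: "(\<psi> has_derivative (\<lambda>s. s * ((G (\<gamma> t) - G0) \<bullet> (p - p0)))) (at t)"
          if "0 < t" "t < 1" for t
        proof -
          have \<gamma>t: "\<gamma> t \<in> prob_simplex" "\<gamma> t \<noteq> p0" "dist (\<gamma> t) p0 < d1"
          proof -
            show "\<gamma> t \<in> prob_simplex" using that \<gamma>S by auto
            have "norm (\<gamma> t - p0) = t * n" using that \<gamma>d by auto
            moreover have "t * n < \<delta>"
            proof -
              have "t * n < 1 * n" using that npos by (intro mult_strict_right_mono) auto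
              then show ?thesis using True by simp
            qed
            ultimately show "\<gamma> t \<noteq> p0" "dist (\<gamma> t) p0 < d1"
              using that npos by (auto simp: dist_norm \<delta>_def)
          qed
          have dv: "(valfun A has_derivative (\<lambda>h. G (\<gamma> t) \<bullet> h)) (at (\<gamma> t) within prob_simplex)"
            using d1 \<gamma>t by blast
          have d\<gamma>: "(\<gamma> has_derivative (\<lambda>s. s *\<^sub>R (p - p0))) (at t within {0..1})"
            unfolding \<gamma>_def by (auto intro!: derivative_eq_intros)
          have "((valfun A \<circ> \<gamma>) has_derivative ((\<lambda>h. G (\<gamma> t) \<bullet> h) \<circ> (\<lambda>s. s *\<^sub>R (p - p0)))) (at t within {0..1})"
            by (rule diff_chain_within[OF d\<gamma> has_derivative_subset[OF dv]]) (use \<gamma>S in auto)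
          then have "((\<lambda>s. valfun A (\<gamma> s)) has_derivative (\<lambda>s. s * (G (\<gamma> t) \<bullet> (p - p0)))) (at t)"
            using at_within_Icc_at[OF that] by (simp add: o_def)
          then have "(\<psi> has_derivative (\<lambda>s. s * (G (\<gamma> t) \<bullet> (p - p0)) - s * (G0 \<bullet> (p - p0)))) (at t)"
            unfolding \<psi>_def by (intro derivative_eq_intros) auto
          then show ?thesis by (simp add: algebra_simps inner_diff_left)
        qed
        obtain t where t: "t \<in> {0<..<1}"
          "norm (\<psi> 1 - \<psi> 0) \<le> norm ((1 - 0) * ((G (\<gamma> t) - G0) \<bullet> (p - p0)))"
          using mvt_general[OF zero_less_one cont der] by blast
        have e1: "\<psi> 1 - \<psi> 0 = valfun A p - valfun A p0 - G0 \<bullet> (p - p0)"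
          by (simp add: \<psi>_def \<gamma>_def)
        have "\<bar>(G (\<gamma> t) - G0) \<bullet> (p - p0)\<bar> \<le> norm (G (\<gamma> t) - G0) * n"
          unfolding n_def by (rule Cauchy_Schwarz_ineq2)
        also have "norm (G (\<gamma> t) - G0) \<le> (1 + K) * (t * n)"
        proof -
          have "t * n < 1 * n" using t npos by (intro mult_strict_right_mono) auto
          then have "t * n < \<delta>" using True by simp
          then show ?thesis using Gb[of "\<gamma> t"] \<gamma>S[of t] \<gamma>d[of t] t by (auto simp: G0_def)
        qed
        also have "(1 + K) * (t * n) \<le> (1 + K) * n"
          using t npos K by (intro mult_left_mono) auto
        finally have "\<bar>(G (\<gamma> t) - G0) \<bullet> (p - p0)\<bar> \<le> (1 + K) * n * n"
          using npos by (simp add: mult_right_mono)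
        also have "\<dots> \<le> C * n\<^sup>2"
        proof -
          have "(1 + K) * (n * n) \<le> C * (n * n)" by (rule mult_right_mono) (auto simp: C_def)
          then show ?thesis by (simp add: power2_eq_square mult.assoc)
        qed
        finally show ?thesis using t(2) e1 by (simp add: n_def)
      qed
    next
      case False
      then have nd: "\<delta> \<le> n" by simp
      have a1: "valfun A p - valfun A p0 \<le> R * n"
        using valfun_lip[OF R(1) R(3), of p p0] by (simp add: n_def)
      have a2: "- (G0 \<bullet> (p - p0)) \<le> norm G0 * n"
        using Cauchy_Schwarz_ineq2[of G0 "p - p0"] by (simp add: n_def)
      have "(R + norm G0) * n \<le> (R + norm G0) / \<delta> * n\<^sup>2"
      proof -
        have "(R + norm G0) * n = (R + norm G0) / \<delta> * (\<delta> * n)" using \<delta> by simp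
        also have "\<dots> \<le> (R + norm G0) / \<delta> * (n * n)"
          using nd \<delta> R(2) by (intro mult_left_mono mult_right_mono) auto
        finally show ?thesis by (simp add: power2_eq_square)
      qed
      also have "\<dots> \<le> C * n\<^sup>2" by (rule mult_right_mono) (auto simp: C_def)
      finally show ?thesis using a1 a2 by (simp add: n_def algebra_simps)
    qed
  qed
qed


lemma meas_comp:
  fixes f :: "'a::topological_space \<Rightarrow> 'b::topological_space"
  shows "continuous_on UNIV f \<Longrightarrow> Q \<in> borel_measurable N \<Longrightarrow> (\<lambda>\<omega>. f (Q \<omega>)) \<in> borel_measurable N"
  by (rule measurable_compose[OF _ borel_measurable_continuous_onI])

lemma int_bdd:
  fixes f :: "'a::topological_space \<Rightarrow> 'b::{banach,second_countable_topology}"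
  assumes "prob_space N" "continuous_on UNIV f" "Q \<in> borel_measurable N"
    "\<And>\<omega>. \<omega> \<in> space N \<Longrightarrow> norm (f (Q \<omega>)) \<le> B"
  shows "integrable N (\<lambda>\<omega>. f (Q \<omega>))"
proof -
  interpret prob_space N by fact
  show ?thesis
    by (rule integrable_const_bound[OF AE_I2]) (use assms meas_comp in auto)
qed

theorem proposition5p1:
  fixes A :: "(real^'k::finite) set"
    and p0 :: "real^'k"
    and M :: "real \<Rightarrow> 'w measure"
    and q :: "real \<Rightarrow> 'w \<Rightarrow> real^'k"
  assumes A_ne: "A \<noteq> {}" and A_compact: "compact A" and A_convex: "convex A"
    and p0_simplex: "p0 \<in> prob_simplex" and p0_full: "\<forall>k. 0 < p0 $ k"
    and prob: "\<And>\<theta>. \<theta> > 0 \<Longrightarrow> prob_space (M \<theta>)"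
    and meas: "\<And>\<theta>. \<theta> > 0 \<Longrightarrow> q \<theta> \<in> borel_measurable (M \<theta>)"
    and vals: "\<And>\<theta> \<omega>. \<theta> > 0 \<Longrightarrow> \<omega> \<in> space (M \<theta>) \<Longrightarrow> q \<theta> \<omega> \<in> prob_simplex"
    and mean: "\<And>\<theta>. \<theta> > 0 \<Longrightarrow> (\<integral>\<omega>. q \<theta> \<omega> \<partial>M \<theta>) = p0"
    and cond: "(\<lambda>\<theta>. \<integral>\<omega>. infdist (q \<theta> \<omega>) (confset A p0) \<partial>M \<theta>) \<in> o[at_right 0](\<lambda>\<theta>. \<theta>)
            \<or> (C2_hypersurface (frontier A) \<and> flexible A p0 \<and>
               (\<lambda>\<theta>. \<integral>\<omega>. (norm (q \<theta> \<omega> - p0))\<^sup>2 \<partial>M \<theta>) \<in> o[at_right 0](\<lambda>\<theta>. \<theta>))"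
  shows "Limsup (at_right 0)
           (\<lambda>\<theta>. ereal (((\<integral>\<omega>. valfun A (q \<theta> \<omega>) \<partial>M \<theta>) - valfun A p0) / \<theta>)) = 0"
proof -
  obtain R where R: "R > 0" "\<forall>a\<in>A. norm a \<le> R" using bound_A[OF A_compact] by blast
  have vc: "continuous_on UNIV (valfun A)" using valfun_cont[OF R(2) A_ne] R(1) by simp
  obtain a0 where a0: "a0 \<in> A" "\<forall>a'\<in>A. p0 \<bullet> a' \<le> p0 \<bullet> a0"
  proof -
    have "compact ((\<lambda>a. p0 \<bullet> a) ` A)"
      by (rule compact_continuous_image[OF _ A_compact]) (intro continuous_intros)
    then obtain s where "s \<in> (\<lambda>a. p0 \<bullet> a) ` A" "\<forall>t\<in>(\<lambda>a. p0 \<bullet> a) ` A. t \<le> s"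
      using compact_attains_sup[of "(\<lambda>a. p0 \<bullet> a) ` A"] A_ne by blast
    then show ?thesis using that by blast
  qed
  have a0opt: "a0 \<in> optact A p0" using a0 by (simp add: optact_def)
  have vp: "valfun A p \<le> p \<bullet> a0" if "\<forall>a'\<in>A. p \<bullet> a' \<le> p \<bullet> a0" for p
    unfolding valfun_def using that A_ne by (intro cSUP_least) auto
  have vp0: "valfun A p0 = p0 \<bullet> a0"
    using vp[OF a0(2)] valfun_ge[OF R(2) a0(1), of p0] by simp
  define V where "V = (\<lambda>\<theta>. (\<integral>\<omega>. valfun A (q \<theta> \<omega>) \<partial>M \<theta>) - valfun A p0)"
  have nq: "norm (q \<theta> \<omega> - p0) \<le> 2" if "\<theta> > 0" "\<omega> \<in> space (M \<theta>)" for \<theta> \<omega>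
    using norm_triangle_ineq4[of "q \<theta> \<omega>" p0] simplex_norm_le[OF vals[OF that]]
      simplex_norm_le[OF p0_simplex] by simp
  have intQ: "integrable (M \<theta>) (q \<theta>)" if "\<theta> > 0" for \<theta>
  proof -
    have "integrable (M \<theta>) (\<lambda>\<omega>. (\<lambda>x. x) (q \<theta> \<omega>))"
      by (rule int_bdd[OF prob[OF that] continuous_on_id meas[OF that], of 1])
        (use simplex_norm_le vals[OF that] in auto)
    then show ?thesis by simp
  qed
  have intV: "integrable (M \<theta>) (\<lambda>\<omega>. valfun A (q \<theta> \<omega>))" if "\<theta> > 0" for \<theta>
  proof (rule int_bdd[OF prob[OF that] vc meas[OF that]])
    fix \<omega> assume "\<omega> \<in> space (M \<theta>)"
    show "norm (valfun A (q \<theta> \<omega>)) \<le> \<bar>valfun A p0\<bar> + R * 2"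
    proof -
      have "\<bar>valfun A (q \<theta> \<omega>) - valfun A p0\<bar> \<le> R * norm (q \<theta> \<omega> - p0)"
        by (rule valfun_lip_abs[OF R(2) A_ne])
      also have "\<dots> \<le> R * 2" using nq[OF that \<open>\<omega> \<in> space (M \<theta>)\<close>] R(1) by (intro mult_left_mono) auto
      finally have "\<bar>valfun A (q \<theta> \<omega>) - valfun A p0\<bar> \<le> R * 2" .
      then show ?thesis unfolding real_norm_def by linarith
    qed
  qed
  have intI: "integrable (M \<theta>) (\<lambda>\<omega>. q \<theta> \<omega> \<bullet> c)" if "\<theta> > 0" for \<theta> c
    using intQ[OF that] by (intro integrable_inner_left) auto
  have lower: "0 \<le> V \<theta>" if "\<theta> > 0" for \<theta>
  proof -
    have "valfun A p0 = (\<integral>\<omega>. q \<theta> \<omega> \<bullet> a0 \<partial>M \<theta>)"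
      using vp0 mean[OF that] intQ[OF that] by simp
    also have "\<dots> \<le> (\<integral>\<omega>. valfun A (q \<theta> \<omega>) \<partial>M \<theta>)"
      by (rule integral_mono[OF intI[OF that] intV[OF that]]) (rule valfun_ge[OF R(2) a0(1)])
    finally show ?thesis by (simp add: V_def)
  qed
  from cond show ?thesis
  proof
    let ?CS = "confset A p0"
    assume o: "(\<lambda>\<theta>. \<integral>\<omega>. infdist (q \<theta> \<omega>) ?CS \<partial>M \<theta>) \<in> o[at_right 0](\<lambda>\<theta>. \<theta>)"
    have p0CS: "p0 \<in> ?CS"
      using p0_simplex by (auto simp: confset_def optbeliefs_def optact_def)
    have CSne: "?CS \<noteq> {}" using p0CS by auto
    have pw: "valfun A x - x \<bullet> a0 \<le> 2 * R * infdist x ?CS" for x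
    proof -
      have "(valfun A x - x \<bullet> a0) / (2 * R) \<le> infdist x ?CS"
        unfolding infdist_notempty[OF CSne]
      proof (rule cINF_greatest)
        show "?CS \<noteq> {}" using p0CS by auto
        fix p assume p: "p \<in> ?CS"
        then have "p \<in> optbeliefs A a0" using a0opt by (auto simp: confset_def)
        then have "valfun A p \<le> p \<bullet> a0" by (intro vp) (auto simp: optbeliefs_def)
        moreover have "valfun A x \<le> valfun A p + R * norm (x - p)" by (rule valfun_lip[OF R(2) A_ne])
        moreover have "(p - x) \<bullet> a0 \<le> norm (p - x) * R"
        proof -
          have "(p - x) \<bullet> a0 \<le> norm (p - x) * norm a0" by (rule norm_cauchy_schwarz)
          also have "\<dots> \<le> norm (p - x) * R" using R(2) a0(1) by (intro mult_left_mono) auto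
          finally show ?thesis .
        qed
        ultimately have "valfun A x - x \<bullet> a0 \<le> 2 * R * dist x p"
          by (simp add: inner_diff_left dist_norm norm_minus_commute algebra_simps)
        then show "(valfun A x - x \<bullet> a0) / (2 * R) \<le> dist x p"
          using R(1) by (simp add: divide_le_eq mult.commute)
      qed
      then show ?thesis using R(1) by (simp add: divide_le_eq mult.commute)
    qed
    have ci: "continuous_on UNIV (\<lambda>x. infdist x ?CS)" by (intro continuous_intros)
    have upper: "V \<theta> \<le> 2 * R * (\<integral>\<omega>. infdist (q \<theta> \<omega>) ?CS \<partial>M \<theta>)" if "\<theta> > 0" for \<theta>
    proof -
      have intD: "integrable (M \<theta>) (\<lambda>\<omega>. infdist (q \<theta> \<omega>) ?CS)"
      proof (rule int_bdd[OF prob[OF that] ci meas[OF that]])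
        fix \<omega> assume "\<omega> \<in> space (M \<theta>)"
        then show "norm (infdist (q \<theta> \<omega>) ?CS) \<le> 2"
          using infdist_le[OF p0CS, of "q \<theta> \<omega>"] nq[OF that, of \<omega>] infdist_nonneg[of "q \<theta> \<omega>" ?CS]
          by (simp add: dist_norm)
      qed
      have "(\<integral>\<omega>. valfun A (q \<theta> \<omega>) \<partial>M \<theta>) - valfun A p0
          = (\<integral>\<omega>. valfun A (q \<theta> \<omega>) - q \<theta> \<omega> \<bullet> a0 \<partial>M \<theta>)"
        using vp0 mean[OF that] intQ[OF that] intV[OF that] intI[OF that] by simp
      also have "\<dots> \<le> (\<integral>\<omega>. 2 * R * infdist (q \<theta> \<omega>) ?CS \<partial>M \<theta>)"
        by (rule integral_mono) (use intV[OF that] intI[OF that] intD pw in auto)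
      also have "\<dots> = 2 * R * (\<integral>\<omega>. infdist (q \<theta> \<omega>) ?CS \<partial>M \<theta>)" by simp
      finally show ?thesis by (simp add: V_def)
    qed
    show ?thesis
      using final_limsup[of V "2 * R", OF _ o] lower upper by (simp add: V_def)
  next
    assume "C2_hypersurface (frontier A) \<and> flexible A p0 \<and>
               (\<lambda>\<theta>. \<integral>\<omega>. (norm (q \<theta> \<omega> - p0))\<^sup>2 \<partial>M \<theta>) \<in> o[at_right 0](\<lambda>\<theta>. \<theta>)"
    then have flex: "flexible A p0"
      and o: "(\<lambda>\<theta>. \<integral>\<omega>. (norm (q \<theta> \<omega> - p0))\<^sup>2 \<partial>M \<theta>) \<in> o[at_right 0](\<lambda>\<theta>. \<theta>)" by auto
    obtain G0 C where GC: "\<forall>p\<in>prob_simplex. valfun A p - valfun A p0 - G0 \<bullet> (p - p0) \<le> C * (norm (p - p0))\<^sup>2"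
      using taylor_bound[OF flex R(2) R(1) A_ne p0_simplex] by blast
    have cn: "continuous_on UNIV (\<lambda>x. (norm (x - p0))\<^sup>2)" by (intro continuous_intros)
    have upper: "V \<theta> \<le> C * (\<integral>\<omega>. (norm (q \<theta> \<omega> - p0))\<^sup>2 \<partial>M \<theta>)" if "\<theta> > 0" for \<theta>
    proof -
      interpret prob_space "M \<theta>" using prob[OF that] .
      have intN: "integrable (M \<theta>) (\<lambda>\<omega>. (norm (q \<theta> \<omega> - p0))\<^sup>2)"
      proof (rule int_bdd[OF prob[OF that] cn meas[OF that]])
        fix \<omega> assume "\<omega> \<in> space (M \<theta>)"
        show "norm ((norm (q \<theta> \<omega> - p0))\<^sup>2) \<le> 2\<^sup>2"
          using power_mono[OF nq[OF that \<open>\<omega> \<in> space (M \<theta>)\<close>] norm_ge_zero, of 2] by simp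
      qed
      have intG: "integrable (M \<theta>) (\<lambda>\<omega>. G0 \<bullet> q \<theta> \<omega>)"
        using intQ[OF that] by (intro integrable_inner_right) auto
      have "(\<integral>\<omega>. valfun A (q \<theta> \<omega>) \<partial>M \<theta>)
          \<le> (\<integral>\<omega>. (valfun A p0 - G0 \<bullet> p0) + G0 \<bullet> q \<theta> \<omega> + C * (norm (q \<theta> \<omega> - p0))\<^sup>2 \<partial>M \<theta>)"
      proof (rule integral_mono)
        show "integrable (M \<theta>) (\<lambda>\<omega>. valfun A (q \<theta> \<omega>))" by (rule intV[OF that])
        show "integrable (M \<theta>) (\<lambda>\<omega>. (valfun A p0 - G0 \<bullet> p0) + G0 \<bullet> q \<theta> \<omega> + C * (norm (q \<theta> \<omega> - p0))\<^sup>2)"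
          using intG intN by auto
        fix \<omega> assume "\<omega> \<in> space (M \<theta>)"
        show "valfun A (q \<theta> \<omega>) \<le> (valfun A p0 - G0 \<bullet> p0) + G0 \<bullet> q \<theta> \<omega> + C * (norm (q \<theta> \<omega> - p0))\<^sup>2"
        proof -
          have "q \<theta> \<omega> \<in> prob_simplex" using vals[OF that \<open>\<omega> \<in> space (M \<theta>)\<close>] .
          then have "valfun A (q \<theta> \<omega>) - valfun A p0 - G0 \<bullet> (q \<theta> \<omega> - p0) \<le> C * (norm (q \<theta> \<omega> - p0))\<^sup>2"
            using GC by blast
          then show ?thesis by (simp add: inner_diff_right)
        qed
      qed
      also have "\<dots> = (valfun A p0 - G0 \<bullet> p0) + G0 \<bullet> p0 + C * (\<integral>\<omega>. (norm (q \<theta> \<omega> - p0))\<^sup>2 \<partial>M \<theta>)"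
        using intG intN intQ[OF that] mean[OF that] by (simp add: prob_space)
      finally show ?thesis by (simp add: V_def)
    qed
    show ?thesis
      using final_limsup[of V C, OF _ o] lower upper by (simp add: V_def)
  qed
qed


end
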